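(* Let $p=(p_i)_{i\in\mathbb{N}}\in[0,1]^{\mathbb{N}}$ be a cookie environment, and let $\overline{p}_n=\frac1n\sum_{i=1}^n p_i$. Suppose that the limit $\overline{p}=\lim_{n\to\infty}\overline{p}_n$ exists and lies in $(0,1)$, and that there is $K\in\mathbb{R}$ with $|\overline{p}_n-\overline{p}|\le\frac Kn$ for all $n\in\mathbb{N}$. Let $\mu=\frac{\overline{p}}{1-\overline{p}}$. Then there is a constant $c>0$ depending only on $p$ such that for all positive integers $x$ and all $\varepsilon>0$, \[ \Pr\Big[\Big|\frac{U_p(x)}{x}-\mu\Big|>\varepsilon\Big]\le 2\exp\Big(-\frac{c\varepsilon^2}{1+\mu+\varepsilon}x\Big). \]
   Context: For a cookie environment $p$, let $B_1,B_2,\dots$ be independent Bernoulli random variables with $\Pr[B_i=1]=p_i$ ($B_i=1$ is a "success", $B_i=0$ a "failure"). For a positive integer $x$, $U_p(x)=\inf\{k\in\mathbb{N}:\sum_{i=1}^k(1-B_i)=x\}-x$, i.e. the number of successes before the $x$-th failure. *)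

theory Defs
  imports "HOL-Probability.Probability"
begin

text \<open>The probability space of the independent Bernoulli variables B_i (i >= 1):
  an outcome is omega :: nat => bool, with B_i = omega i (True = success).
  The coordinate 0 is an unused dummy coordinate.\<close>
definition cookie_space :: "(nat \<Rightarrow> real) \<Rightarrow> (nat \<Rightarrow> bool) measure" where
  "cookie_space p = (\<Pi>\<^sub>M i\<in>UNIV. measure_pmf (bernoulli_pmf (p i)))"

definition failures :: "(nat \<Rightarrow> bool) \<Rightarrow> nat \<Rightarrow> nat" where
  "failures \<omega> k = card {i \<in> {1..k}. \<not> \<omega> i}"

definition U :: "(nat \<Rightarrow> bool) \<Rightarrow> nat \<Rightarrow> enat" where
  "U \<omega> x = (if \<exists>k. failures \<omega> k = x then enat ((LEAST k. failures \<omega> k = x) - x) else \<infinity>)"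

definition pbar :: "(nat \<Rightarrow> real) \<Rightarrow> nat \<Rightarrow> real" where
  "pbar p n = (\<Sum>i=1..n. p i) / real n"

end

theory Submission imports Defs begin

lemma cookie_prob: "prob_space (cookie_space p)"
  unfolding cookie_space_def
  by (intro prob_space_PiM measure_pmf.prob_space_axioms)

lemma cookie_pps: "product_prob_space (\<lambda>i. measure_pmf (bernoulli_pmf (p i)))"
  by unfold_locales

lemma cookie_indep:
  assumes "finite I" "I \<noteq> {}"
  shows "prob_space.indep_vars (cookie_space p) (\<lambda>i. measure_pmf (bernoulli_pmf (p i))) (\<lambda>i \<omega>. \<omega> i) I"
proof -
  interpret P: product_prob_space "\<lambda>i. measure_pmf (bernoulli_pmf (p i))" UNIV by (rule cookie_pps)
  have rv: "(\<lambda>\<omega>. \<omega> i) \<in> measurable (cookie_space p) (measure_pmf (bernoulli_pmf (p i)))" for i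
    unfolding cookie_space_def by (rule measurable_component_singleton) simp
  show ?thesis
    apply (subst prob_space.indep_vars_iff_distr_eq_PiM[OF cookie_prob assms(2) rv])
    unfolding cookie_space_def
    apply (subst distr_PiM_component)
      apply (auto intro: measure_pmf.prob_space_axioms)[2]
    apply (subst P.distr_PiM_restrict_finite[OF assms(1)])
    by auto
qed


lemma cookie_expect:
  assumes "0 \<le> p i" "p i \<le> 1"
  shows "integral\<^sup>L (cookie_space p) (\<lambda>\<omega>. if \<omega> i then 0 else 1 :: real) = 1 - p i"
proof -
  have rv: "(\<lambda>\<omega>. \<omega> i) \<in> measurable (cookie_space p) (measure_pmf (bernoulli_pmf (p i)))"
    unfolding cookie_space_def by (rule measurable_component_singleton) simp
  have "integral\<^sup>L (cookie_space p) (\<lambda>\<omega>. if \<omega> i then 0 else 1 :: real)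
     = integral\<^sup>L (distr (cookie_space p) (measure_pmf (bernoulli_pmf (p i))) (\<lambda>\<omega>. \<omega> i)) (\<lambda>b. if b then 0 else 1 :: real)"
    by (subst integral_distr[OF rv]) auto
  also have "distr (cookie_space p) (measure_pmf (bernoulli_pmf (p i))) (\<lambda>\<omega>. \<omega> i) = measure_pmf (bernoulli_pmf (p i))"
    unfolding cookie_space_def by (rule distr_PiM_component) (auto intro: measure_pmf.prob_space_axioms)
  finally show ?thesis using assms by simp
qed

definition Yf :: "nat \<Rightarrow> (nat \<Rightarrow> bool) \<Rightarrow> real" where
  "Yf i \<omega> = (if \<omega> i then 0 else 1)"

lemma cookie_hoeff:
  assumes pr: "\<And>i. i \<ge> 1 \<Longrightarrow> 0 \<le> p i \<and> p i \<le> 1" and N: "N \<ge> 1" and t: "t \<ge> 0"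
  shows "measure (cookie_space p) {\<omega>\<in>space (cookie_space p). (\<Sum>i\<in>{1..N}. Yf i \<omega>) \<le> (\<Sum>i=1..N. 1 - p i) - t} \<le> exp (-2*t\<^sup>2/N)"
    and "measure (cookie_space p) {\<omega>\<in>space (cookie_space p). (\<Sum>i\<in>{1..N}. Yf i \<omega>) \<ge> (\<Sum>i=1..N. 1 - p i) + t} \<le> exp (-2*t\<^sup>2/N)"
proof -
  interpret prob_space "cookie_space p" by (rule cookie_prob)
  have ind: "indep_vars (\<lambda>_. borel) Yf {1..N}"
    unfolding Yf_def
    by (rule indep_vars_compose2[OF cookie_indep]) (use N in auto)
  interpret H: Hoeffding_ineq "cookie_space p" "{1..N}" Yf "\<lambda>_. 0" "\<lambda>_. 1" "\<Sum>i\<in>{1..N}. expectation (Yf i)"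
  proof unfold_locales
    show "finite {1..N}" by simp
    show "indep_vars (\<lambda>_. borel) Yf {1..N}" by (rule ind)
    fix i assume "i \<in> {1..N}"
    show "AE x in cookie_space p. Yf i x \<in> {0..1}" by (intro AE_I2) (simp add: Yf_def)
  qed
  have E: "(\<Sum>i\<in>{1..N}. expectation (Yf i)) = (\<Sum>i=1..N. 1 - p i)"
  proof (rule sum.cong)
    fix i assume "i \<in> {1..N}"
    then have "0 \<le> p i" "p i \<le> 1" using pr by auto
    then show "expectation (Yf i) = 1 - p i"
      unfolding Yf_def[abs_def] by (rule cookie_expect)
  qed simp
  have d: "(\<Sum>i\<in>{1..N}. ((1::real) - 0)\<^sup>2) = real N" by simp
  have pos: "(\<Sum>i\<in>{1..N}. ((1::real) - 0)\<^sup>2) > 0" using N by simp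
  show "measure (cookie_space p) {\<omega>\<in>space (cookie_space p). (\<Sum>i\<in>{1..N}. Yf i \<omega>) \<le> (\<Sum>i=1..N. 1 - p i) - t} \<le> exp (-2*t\<^sup>2/N)"
    using H.Hoeffding_ineq_le[OF t pos] unfolding E d .
  show "measure (cookie_space p) {\<omega>\<in>space (cookie_space p). (\<Sum>i\<in>{1..N}. Yf i \<omega>) \<ge> (\<Sum>i=1..N. 1 - p i) + t} \<le> exp (-2*t\<^sup>2/N)"
    using H.Hoeffding_ineq_ge[OF t pos] unfolding E d .
qed

lemma Yf_sum: "(\<Sum>i\<in>{1..N}. Yf i \<omega>) = real (failures \<omega> N)"
proof -
  have "(\<Sum>i\<in>{1..N}. Yf i \<omega>) = (\<Sum>i\<in>{i \<in> {1..N}. \<not> \<omega> i}. 1)"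
    unfolding Yf_def by (rule sum.mono_neutral_cong_right) auto
  thus ?thesis by (simp add: failures_def)
qed

lemma Yf_meas1: "Yf i \<in> borel_measurable (cookie_space p)"
proof -
  have rv: "(\<lambda>\<omega>. \<omega> i) \<in> measurable (cookie_space p) (measure_pmf (bernoulli_pmf (p i)))"
    unfolding cookie_space_def by (rule measurable_component_singleton) simp
  have f: "(\<lambda>b. if b then 0 else 1::real) \<in> borel_measurable (measure_pmf (bernoulli_pmf (p i)))"
    by simp
  show ?thesis using measurable_compose[OF rv f] unfolding Yf_def by simp
qed

lemma Yf_meas: "(\<lambda>\<omega>. \<Sum>i\<in>{1..N}. Yf i \<omega>) \<in> borel_measurable (cookie_space p)"
  by (rule borel_measurable_sum) (rule Yf_meas1)


lemma failures_0 [simp]: "failures \<omega> 0 = 0"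
  by (simp add: failures_def)

lemma failures_Suc: "failures \<omega> (Suc k) = failures \<omega> k + (if \<omega> (Suc k) then 0 else 1)"
proof -
  have "{i \<in> {1..Suc k}. \<not> \<omega> i} = {i \<in> {1..k}. \<not> \<omega> i} \<union> (if \<omega> (Suc k) then {} else {Suc k})"
    by (auto simp: le_Suc_eq)
  thus ?thesis by (auto simp: failures_def)
qed

lemma failures_le: "failures \<omega> k \<le> k"
proof -
  have "failures \<omega> k \<le> card {1..k}" unfolding failures_def by (rule card_mono) auto
  thus ?thesis by simp
qed

lemma failures_mono: "k \<le> l \<Longrightarrow> failures \<omega> k \<le> failures \<omega> l"
  unfolding failures_def by (rule card_mono) auto

lemma failures_ivt: "x \<le> failures \<omega> k \<Longrightarrow> \<exists>j\<le>k. failures \<omega> j = x"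
proof (induction k)
  case 0 thus ?case by simp
next
  case (Suc k)
  show ?case
  proof (cases "x \<le> failures \<omega> k")
    case True thus ?thesis using Suc.IH le_Suc_eq by blast
  next
    case False
    with Suc.prems failures_Suc[of \<omega> k] have "failures \<omega> (Suc k) = x" by (auto split: if_splits)
    thus ?thesis by blast
  qed
qed

lemma U_upper:
  assumes "x \<le> failures \<omega> N"
  shows "U \<omega> x \<noteq> \<infinity> \<and> the_enat (U \<omega> x) \<le> N - x"
proof -
  obtain j where j: "j \<le> N" "failures \<omega> j = x" using failures_ivt[OF assms] by blast
  have "(LEAST k. failures \<omega> k = x) \<le> j" using j(2) by (rule Least_le)
  thus ?thesis using j unfolding U_def by auto
qed

lemma U_lower:
  assumes "U \<omega> x = enat u"
  shows "failures \<omega> (x + u) = x"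
proof -
  have ex: "\<exists>k. failures \<omega> k = x" using assms unfolding U_def by (auto split: if_splits)
  then have u: "u = (LEAST k. failures \<omega> k = x) - x" using assms unfolding U_def by auto
  have f: "failures \<omega> (LEAST k. failures \<omega> k = x) = x" using ex by (rule LeastI_ex)
  have "x \<le> (LEAST k. failures \<omega> k = x)" using failures_le[of \<omega> "LEAST k. failures \<omega> k = x"] f by simp
  then have "x + u = (LEAST k. failures \<omega> k = x)" using u by simp
  thus ?thesis using f by simp
qed

lemma exp_aux:
  fixes t N D e x q c :: real
  assumes "0 < D" "0 < N" "N \<le> x*D" "e*x*q/2 \<le> t" "0 \<le> e*x*q" "0 < x" "c \<le> q\<^sup>2/2" "0 \<le> c"
  shows "exp (-2*t\<^sup>2/N) \<le> exp (-(c*e\<^sup>2/D)*x)"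
proof -
  have t0: "0 \<le> t" using assms by linarith
  have "(e*x*q/2)\<^sup>2 \<le> t\<^sup>2" using assms t0 by (intro power_mono) auto
  have "c*e\<^sup>2/D*x = (c*e\<^sup>2*x\<^sup>2) / (x*D)" using assms by (simp add: field_simps power2_eq_square)
  also have "\<dots> \<le> (q\<^sup>2/2*e\<^sup>2*x\<^sup>2) / (x*D)"
    using assms by (intro divide_right_mono mult_right_mono) auto
  also have "\<dots> = 2*(e*x*q/2)\<^sup>2 / (x*D)" by (simp add: field_simps power2_eq_square)
  also have "\<dots> \<le> 2*t\<^sup>2 / (x*D)"
    using \<open>(e*x*q/2)\<^sup>2 \<le> t\<^sup>2\<close> assms by (intro divide_right_mono) auto
  also have "\<dots> \<le> 2*t\<^sup>2 / N"
    using assms by (intro divide_left_mono) auto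
  finally show ?thesis by simp
qed


theorem proposition2p1:
  fixes p :: "nat \<Rightarrow> real" and pb K :: real
  assumes p_range: "\<And>i. i \<ge> 1 \<Longrightarrow> 0 \<le> p i \<and> p i \<le> 1"
    and lim: "pbar p \<longlonglongrightarrow> pb"
    and pb_range: "0 < pb" "pb < 1"
    and rate: "\<And>n. n \<ge> 1 \<Longrightarrow> \<bar>pbar p n - pb\<bar> \<le> K / real n"
  shows "\<exists>c>0. \<forall>x::nat. x \<ge> 1 \<longrightarrow> (\<forall>\<epsilon>::real. \<epsilon> > 0 \<longrightarrow>
           measure (cookie_space p)
             {\<omega> \<in> space (cookie_space p).
                U \<omega> x = \<infinity> \<or>
                \<bar>real (the_enat (U \<omega> x)) / real x - pb / (1 - pb)\<bar> > \<epsilon>}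
           \<le> 2 * exp (- (c * \<epsilon>\<^sup>2 / (1 + pb / (1 - pb) + \<epsilon>)) * real x))"
proof -
  define q where "q = 1 - pb"
  define \<mu> where "\<mu> = pb / (1 - pb)"
  have q0: "0 < q" "q \<le> 1" using pb_range by (auto simp: q_def)
  have \<mu>0: "0 \<le> \<mu>" using pb_range by (auto simp: \<mu>_def)
  have q\<mu>: "(1 + \<mu>) * q = 1" using pb_range by (simp add: \<mu>_def q_def field_simps)
  have K0: "0 \<le> K" using rate[of 1] by simp
  have sump: "(\<Sum>i=1..N. p i) \<le> N * pb + K \<and> N * pb - K \<le> (\<Sum>i=1..N. p i)" if N: "N \<ge> 1" for N
  proof -
    have Npos: "real N > 0" using N by simp
    have "\<bar>(\<Sum>i=1..N. p i) / real N - pb\<bar> \<le> K / real N" using rate[OF N] by (simp add: pbar_def)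
    then have "\<bar>(\<Sum>i=1..N. p i) / real N - pb\<bar> * real N \<le> K" using Npos by (simp add: field_simps)
    moreover have "\<bar>(\<Sum>i=1..N. p i) / real N - pb\<bar> * real N = \<bar>(\<Sum>i=1..N. p i) - N * pb\<bar>"
      using Npos by (simp add: abs_mult[symmetric] field_simps)
    ultimately show ?thesis by linarith
  qed
  have Esum: "(\<Sum>i=1..N. 1 - p i) = real N - (\<Sum>i=1..N. p i)" for N
    by (simp add: sum_subtractf)
  define c where "c = min (q\<^sup>2/2) (q/(4*K+1))"
  have c0: "c > 0" using q0 K0 by (simp add: c_def)
  have cq: "c \<le> q\<^sup>2/2" "c \<le> q/(4*K+1)" unfolding c_def by (rule min.cobounded1, rule min.cobounded2)
  show ?thesis
  proof (intro exI[of _ c] conjI allI impI c0)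
    fix x :: nat and \<epsilon> :: real
    assume x: "x \<ge> 1" and e: "\<epsilon> > 0"
    interpret prob_space "cookie_space p" by (rule cookie_prob)
    have [measurable]: "(\<lambda>\<omega>. \<Sum>i\<in>{1..N}. Yf i \<omega>) \<in> borel_measurable (cookie_space p)" for N
      by (rule Yf_meas)
    have [measurable]: "Yf i \<in> borel_measurable (cookie_space p)" for i
      by (rule Yf_meas1)
    define D where "D = 1 + pb / (1 - pb) + \<epsilon>"
    have D: "D = 1 + \<mu> + \<epsilon>" by (simp add: D_def \<mu>_def)
    have D0: "D > 0" using \<mu>0 e D by simp
    have xpos: "real x > 0" using x by simp
    define Ev where "Ev = {\<omega> \<in> space (cookie_space p).
                U \<omega> x = \<infinity> \<or>
                \<bar>real (the_enat (U \<omega> x)) / real x - pb / (1 - pb)\<bar> > \<epsilon>}"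
    have main: "measure (cookie_space p) Ev \<le> 2 * exp (- (c * \<epsilon>\<^sup>2 / D) * real x)"
    proof (cases "\<epsilon> * x * q < 2 * K")
      case True
      have "c * \<epsilon>\<^sup>2 / D * x = (c * \<epsilon> * x) * (\<epsilon> / D)" by (simp add: power2_eq_square)
      also have "\<dots> \<le> (c * \<epsilon> * x) * 1"
        using c0 e xpos D0 D \<mu>0 by (intro mult_left_mono) auto
      also have "\<dots> \<le> q/(4*K+1) * \<epsilon> * x"
      proof -
        have "c*(\<epsilon>*x) \<le> q/(4*K+1)*(\<epsilon>*x)"
          by (rule mult_right_mono[OF cq(2)]) (use e xpos in simp)
        thus ?thesis by (simp only: mult.assoc mult_1_right)
      qed
      also have "\<dots> = (\<epsilon> * x * q) / (4*K+1)" by simp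
      also have "\<dots> \<le> 2 * K / (4*K+1)"
        using True K0 by (intro divide_right_mono) auto
      also have "\<dots> \<le> 1/2" using K0 by (simp add: field_simps)
      finally have y: "c * \<epsilon>\<^sup>2 / D * x \<le> 1/2" .
      have "1 - c * \<epsilon>\<^sup>2 / D * x \<le> exp (- (c * \<epsilon>\<^sup>2 / D) * real x)"
        using exp_ge_add_one_self[of "- (c * \<epsilon>\<^sup>2 / D) * real x"] by simp
      moreover have "measure (cookie_space p) Ev \<le> 1" by simp
      ultimately show ?thesis using y by linarith
    next
      case False
      then have big: "2 * K \<le> \<epsilon> * x * q" by simp
      have exq: "0 \<le> \<epsilon> * x * q" using e xpos q0 by simp
      define m1 where "m1 = nat \<lfloor>(\<mu> + \<epsilon>) * x\<rfloor>"
      define N1 where "N1 = x + m1"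
      have fl1: "0 \<le> \<lfloor>(\<mu> + \<epsilon>) * x\<rfloor>" using \<mu>0 e xpos by simp
      have m1r: "real m1 \<le> (\<mu> + \<epsilon>) * x" "(\<mu> + \<epsilon>) * x - 1 \<le> real m1"
        using fl1 by (simp_all add: m1_def)
      have N1: "N1 \<ge> 1" using x by (simp add: N1_def)
      have N1r: "real N1 \<le> x * D" "x * D - 1 \<le> real N1"
        using m1r by (simp_all add: N1_def D algebra_simps)
      define E1 where "E1 = (\<Sum>i=1..N1. 1 - p i)"
      define t1 where "t1 = E1 - (real x - 1)"
      have E1: "E1 \<ge> real N1 * q - K"
      proof -
        have "real N1 * q = real N1 - real N1 * pb" by (simp add: q_def algebra_simps)
        thus ?thesis using sump[OF N1] Esum[of N1] unfolding E1_def by linarith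
      qed
      have "real N1 * q \<ge> (x * D - 1) * q" using N1r q0 by (intro mult_right_mono) auto
      moreover have "(x * D - 1) * q = x + \<epsilon> * x * q - q"
      proof -
        have "(x * D - 1) * q = x * ((1 + \<mu>) * q) + \<epsilon> * x * q - q" by (simp add: D algebra_simps)
        thus ?thesis using q\<mu> by simp
      qed
      ultimately have t1: "\<epsilon> * x * q / 2 \<le> t1" using E1 big q0 by (simp add: t1_def)
      define A1 where "A1 = {\<omega>\<in>space (cookie_space p). (\<Sum>i\<in>{1..N1}. Yf i \<omega>) \<le> E1 - t1}"
      have A1m: "A1 \<in> sets (cookie_space p)" unfolding A1_def by measurable
      have A1p: "measure (cookie_space p) A1 \<le> exp (- (c * \<epsilon>\<^sup>2 / D) * real x)"
      proof -
        have "measure (cookie_space p) A1 \<le> exp (-2*t1\<^sup>2/N1)"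
          unfolding A1_def E1_def using cookie_hoeff(1)[OF p_range N1, where t=t1] t1 exq by simp
        also have "\<dots> \<le> exp (- (c * \<epsilon>\<^sup>2 / D) * real x)"
          using exp_aux[of D "real N1" x \<epsilon> q t1 c] D0 N1 N1r t1 exq xpos cq c0 by simp
        finally show ?thesis .
      qed
      define m2 where "m2 = nat \<lfloor>(\<mu> - \<epsilon>) * x\<rfloor>"
      define N2 where "N2 = x + m2"
      have N2: "N2 \<ge> 1" using x by (simp add: N2_def)
      define E2 where "E2 = (\<Sum>i=1..N2. 1 - p i)"
      define t2 where "t2 = real x - E2"
      define A2 where "A2 = (if 0 \<le> \<mu> - \<epsilon> then {\<omega>\<in>space (cookie_space p). (\<Sum>i\<in>{1..N2}. Yf i \<omega>) \<ge> E2 + t2} else {})"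
      have A2m: "A2 \<in> sets (cookie_space p)" unfolding A2_def by (cases "0 \<le> \<mu> - \<epsilon>") (simp_all, measurable)
      have A2p: "measure (cookie_space p) A2 \<le> exp (- (c * \<epsilon>\<^sup>2 / D) * real x)"
      proof (cases "0 \<le> \<mu> - \<epsilon>")
        case True
        have fl2: "0 \<le> \<lfloor>(\<mu> - \<epsilon>) * x\<rfloor>" using True xpos by simp
        have m2r: "real m2 \<le> (\<mu> - \<epsilon>) * x"
          using fl2 by (simp add: m2_def)
        have N2r: "real N2 \<le> x * (1 + \<mu> - \<epsilon>)" using m2r by (simp add: N2_def algebra_simps)
        have ex0: "0 \<le> \<epsilon> * real x" using e xpos by simp
        have N2D: "real N2 \<le> x * D" using N2r ex0 by (simp add: D algebra_simps)
        have E2: "E2 \<le> real N2 * q + K"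
        proof -
          have "real N2 * q = real N2 - real N2 * pb" by (simp add: q_def algebra_simps)
          thus ?thesis using sump[OF N2] Esum[of N2] unfolding E2_def by linarith
        qed
        have "real N2 * q \<le> x * (1 + \<mu> - \<epsilon>) * q" using N2r q0 by (intro mult_right_mono) auto
        moreover have "x * (1 + \<mu> - \<epsilon>) * q = x - \<epsilon> * x * q"
        proof -
          have "x * (1 + \<mu> - \<epsilon>) * q = x * ((1 + \<mu>) * q) - \<epsilon> * x * q" by (simp add: algebra_simps)
          thus ?thesis using q\<mu> by simp
        qed
        ultimately have t2: "\<epsilon> * x * q / 2 \<le> t2" using E2 big by (simp add: t2_def)
        have "measure (cookie_space p) A2 \<le> exp (-2*t2\<^sup>2/N2)"
          unfolding A2_def E2_def using True cookie_hoeff(2)[OF p_range N2, where t=t2] t2 exq by simp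
        also have "\<dots> \<le> exp (- (c * \<epsilon>\<^sup>2 / D) * real x)"
          using exp_aux[of D "real N2" x \<epsilon> q t2 c] D0 N2 N2D t2 exq xpos cq c0 by simp
        finally show ?thesis .
      qed (simp add: A2_def)
      have sub: "Ev \<subseteq> A1 \<union> A2"
      proof
        fix \<omega> assume w: "\<omega> \<in> Ev"
        then have sp: "\<omega> \<in> space (cookie_space p)" by (simp add: Ev_def)
        show "\<omega> \<in> A1 \<union> A2"
        proof (cases "U \<omega> x = \<infinity> \<or> real (the_enat (U \<omega> x)) / real x > \<mu> + \<epsilon>")
          case True
          have "failures \<omega> N1 < x"
          proof (rule ccontr)
            assume "\<not> failures \<omega> N1 < x"
            then have "U \<omega> x \<noteq> \<infinity> \<and> the_enat (U \<omega> x) \<le> N1 - x" by (intro U_upper) simp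
            then have fin: "U \<omega> x \<noteq> \<infinity>" and "real (the_enat (U \<omega> x)) \<le> real m1" by (auto simp: N1_def)
            then have "real (the_enat (U \<omega> x)) \<le> (\<mu> + \<epsilon>) * x" using m1r by linarith
            then have "real (the_enat (U \<omega> x)) / real x \<le> \<mu> + \<epsilon>" using xpos by (simp add: divide_le_eq)
            with True fin show False by simp
          qed
          then have "real (failures \<omega> N1) \<le> E1 - t1" by (simp add: t1_def)
          then have "\<omega> \<in> A1" using sp unfolding A1_def Yf_sum by simp
          thus ?thesis by simp
        next
          case False
          then obtain u where u: "U \<omega> x = enat u" and ul: "real u / real x \<le> \<mu> + \<epsilon>"
            by (cases "U \<omega> x") auto
          have "\<bar>real u / real x - \<mu>\<bar> > \<epsilon>" using w u by (simp add: Ev_def \<mu>_def)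
          with ul have ul2: "real u / real x < \<mu> - \<epsilon>" by linarith
          have "0 \<le> real u / real x" by simp
          with ul2 have pos: "0 \<le> \<mu> - \<epsilon>" by linarith
          have "real u < (\<mu> - \<epsilon>) * x" using ul2 xpos by (simp add: divide_less_eq)
          then have "int u \<le> \<lfloor>(\<mu> - \<epsilon>) * x\<rfloor>" by (simp add: le_floor_iff)
          then have "u \<le> m2" by (simp add: m2_def)
          then have "failures \<omega> (x + u) \<le> failures \<omega> N2" by (intro failures_mono) (simp add: N2_def)
          then have "x \<le> failures \<omega> N2" using U_lower[OF u] by simp
          then have "E2 + t2 \<le> real (failures \<omega> N2)" by (simp add: t2_def)
          then have "\<omega> \<in> A2" using sp pos unfolding A2_def Yf_sum by simp
          thus ?thesis by simp
        qed
      qed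
      have "measure (cookie_space p) Ev \<le> measure (cookie_space p) (A1 \<union> A2)"
        using sub A1m A2m by (intro finite_measure_mono) auto
      also have "\<dots> \<le> measure (cookie_space p) A1 + measure (cookie_space p) A2"
        using A1m A2m by (intro measure_Un_le)
      also have "\<dots> \<le> 2 * exp (- (c * \<epsilon>\<^sup>2 / D) * real x)" using A1p A2p by simp
      finally show ?thesis .
    qed
    show "measure (cookie_space p)
             {\<omega> \<in> space (cookie_space p).
                U \<omega> x = \<infinity> \<or>
                \<bar>real (the_enat (U \<omega> x)) / real x - pb / (1 - pb)\<bar> > \<epsilon>}
           \<le> 2 * exp (- (c * \<epsilon>\<^sup>2 / (1 + pb / (1 - pb) + \<epsilon>)) * real x)"
      using main unfolding Ev_def D_def .
  qed
qed

end
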